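(* Let $X$ be a real Banach space and let $A: X \rightrightarrows X^*$ be a maximal monotone operator whose Fitzpatrick family is a singleton, i.e. $\mathcal{F}_A = \{F_A\}$. Then the following are equivalent: (i) $A$ is $3$-monotone; (ii) $A$ is cyclically monotone. Moreover, in this case, for every $v^* \in \mathrm{Im}(A)$ the function $x \mapsto F_A(x,v^* )$ is proper, convex and lower semicontinuous on $X$, and \[ A = \partial F_A(\cdot, v^* ). \]
   Context: A function $h: X\times X^* \to \mathbb{R}\cup\{+\infty\}$ is a representative function of $A$ if (R1) $h$ is proper, convex and lower semicontinuous; (R2) $h(x,x^* ) \ge \langle x,x^*\rangle$ for all $(x,x^* )\in X\times X^*$; (R3) $h(x,x^* ) = \langle x,x^*\rangle$ for all $(x,x^* )\in \mathrm{Gr}(A)$. The Fitzpatrick family $\mathcal{F}_A$ is the set of all representative functions of $A$. The Fitzpatrick function is $F_A(x,x^* ) = \sup_{(y,y^* )\in\mathrm{Gr}(A)}\{\langle y,x^*\rangle + \langle x,y^*\rangle - \langle y,y^*\rangle\}$. $\mathrm{Im}(A) = \{x^*: \exists x,\ x^*\in Ax\}$. $A$ is $n$-monotone if $\sum_{i=1}^n \langle a_i,a_i^*\rangle \ge \sum_{i=1}^n \langle a_{i+1},a_i^*\rangle$ for all $(a_i,a_i^* )\in\mathrm{Gr}(A)$, $i=1,\dots,n$, with $a_{n+1}=a_1$; cyclically monotone means $n$-monotone for all $n\in\mathbb{N}$. $\partial$ denotes the convex subdifferential. *)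

theory Defs
  imports "HOL-Analysis.Analysis"
begin

(* The dual space X* is modelled as the Banach space of bounded linear functionals
  'a =>L real; the pairing is the evaluation.  Functions with values in
  R \<union> {+\<infinity>} are modelled as ereal-valued functions that never take the value -\<infinity>. *)

definition pairing :: "'a::real_normed_vector \<Rightarrow> ('a \<Rightarrow>\<^sub>L real) \<Rightarrow> real" where
  "pairing x xs = blinfun_apply xs x"

definition graph :: "('a \<Rightarrow> 'b set) \<Rightarrow> ('a \<times> 'b) set" where
  "graph A = {(x, xs). xs \<in> A x}"

definition image_op :: "('a \<Rightarrow> 'b set) \<Rightarrow> 'b set" where
  "image_op A = {xs. \<exists>x. xs \<in> A x}"

definition monotone_op :: "('a::real_normed_vector \<Rightarrow> ('a \<Rightarrow>\<^sub>L real) set) \<Rightarrow> bool" where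
  "monotone_op A \<longleftrightarrow> (\<forall>(x, xs)\<in>graph A. \<forall>(y, ys)\<in>graph A. pairing (x - y) (xs - ys) \<ge> 0)"

definition maximal_monotone :: "('a::real_normed_vector \<Rightarrow> ('a \<Rightarrow>\<^sub>L real) set) \<Rightarrow> bool" where
  "maximal_monotone A \<longleftrightarrow> monotone_op A \<and>
     (\<forall>B. monotone_op B \<and> graph A \<subseteq> graph B \<longrightarrow> graph B = graph A)"

definition n_monotone :: "nat \<Rightarrow> ('a::real_normed_vector \<Rightarrow> ('a \<Rightarrow>\<^sub>L real) set) \<Rightarrow> bool" where
  "n_monotone n A \<longleftrightarrow> (\<forall>(a :: nat \<Rightarrow> 'a) (as :: nat \<Rightarrow> ('a \<Rightarrow>\<^sub>L real)).
     (\<forall>i\<in>{1..n}. (a i, as i) \<in> graph A) \<longrightarrow>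
     (\<Sum>i=1..n. pairing (a i) (as i)) \<ge> (\<Sum>i=1..n. pairing (if i = n then a 1 else a (i + 1)) (as i)))"

definition cyclically_monotone :: "('a::real_normed_vector \<Rightarrow> ('a \<Rightarrow>\<^sub>L real) set) \<Rightarrow> bool" where
  "cyclically_monotone A \<longleftrightarrow> (\<forall>n::nat. n_monotone n A)"

definition proper_fun :: "('a \<Rightarrow> ereal) \<Rightarrow> bool" where
  "proper_fun f \<longleftrightarrow> (\<forall>x. f x \<noteq> -\<infinity>) \<and> (\<exists>x. f x \<noteq> \<infinity>)"

definition convex_fun :: "('a::real_vector \<Rightarrow> ereal) \<Rightarrow> bool" where
  "convex_fun f \<longleftrightarrow> (\<forall>x y. \<forall>t::real. 0 \<le> t \<and> t \<le> 1 \<longrightarrow>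
     f (t *\<^sub>R x + (1 - t) *\<^sub>R y) \<le> ereal t * f x + ereal (1 - t) * f y)"

(* Lower semicontinuity with respect to the (norm) topology of the domain. *)
definition lsc_fun :: "('a::topological_space \<Rightarrow> ereal) \<Rightarrow> bool" where
  "lsc_fun f \<longleftrightarrow> (\<forall>x. \<forall>c. c < f x \<longrightarrow> (\<forall>\<^sub>F y in nhds x. c < f y))"

definition fitzpatrick :: "('a::real_normed_vector \<Rightarrow> ('a \<Rightarrow>\<^sub>L real) set) \<Rightarrow> 'a \<times> ('a \<Rightarrow>\<^sub>L real) \<Rightarrow> ereal" where
  "fitzpatrick A = (\<lambda>(x, xs). SUP (y, ys)\<in>graph A. ereal (pairing y xs + pairing x ys - pairing y ys))"

definition fitzpatrick_family :: "('a::real_normed_vector \<Rightarrow> ('a \<Rightarrow>\<^sub>L real) set) \<Rightarrow> ('a \<times> ('a \<Rightarrow>\<^sub>L real) \<Rightarrow> ereal) set" where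
  "fitzpatrick_family A = {h. proper_fun h \<and> convex_fun h \<and> lsc_fun h \<and>
     (\<forall>x xs. h (x, xs) \<ge> ereal (pairing x xs)) \<and>
     (\<forall>(x, xs)\<in>graph A. h (x, xs) = ereal (pairing x xs))}"

definition subdiff :: "('a::real_normed_vector \<Rightarrow> ereal) \<Rightarrow> 'a \<Rightarrow> ('a \<Rightarrow>\<^sub>L real) set" where
  "subdiff f x = {xs. f x \<noteq> \<infinity> \<and> f x \<noteq> -\<infinity> \<and>
     (\<forall>y. f y \<ge> f x + ereal (pairing (y - x) xs))}"

end

theory Submission
  imports Defs
begin

lemma sup_affine_lsc:
  fixes L :: "'i \<Rightarrow> 'b::real_normed_vector \<Rightarrow> real"
  assumes "\<And>i x. i \<in> I \<Longrightarrow> isCont (L i) x"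
  shows "lsc_fun (\<lambda>z. SUP i\<in>I. ereal (L i z))"
  unfolding lsc_fun_def
proof (intro allI impI)
  fix x c assume "c < (SUP i\<in>I. ereal (L i x))"
  then obtain i where i: "i \<in> I" "c < ereal (L i x)" by (auto simp: less_SUP_iff)
  have "((\<lambda>y. ereal (L i y)) \<longlongrightarrow> ereal (L i x)) (nhds x)"
  proof (rule tendsto_ereal)
    have "isCont (L i) x" using assms[OF i(1)] .
    then show "(L i \<longlongrightarrow> L i x) (nhds x)" by (simp add: isCont_def tendsto_at_iff_tendsto_nhds)
  qed
  then have "\<forall>\<^sub>F y in nhds x. c < ereal (L i y)" using i(2) by (rule order_tendstoD)
  then show "\<forall>\<^sub>F y in nhds x. c < (SUP i\<in>I. ereal (L i y))"
    by eventually_elim (use i(1) in \<open>auto simp: less_SUP_iff\<close>)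
qed

lemma sup_affine_convex:
  fixes L :: "'i \<Rightarrow> 'b::real_vector \<Rightarrow> real"
  assumes "\<And>i x y t. i \<in> I \<Longrightarrow> L i (t *\<^sub>R x + (1 - t) *\<^sub>R y) = t * L i x + (1 - t) * L i y"
  shows "convex_fun (\<lambda>z. SUP i\<in>I. ereal (L i z))"
  unfolding convex_fun_def
proof (intro allI impI)
  fix x y and t :: real assume t: "0 \<le> t \<and> t \<le> 1"
  show "(SUP i\<in>I. ereal (L i (t *\<^sub>R x + (1 - t) *\<^sub>R y)))
     \<le> ereal t * (SUP i\<in>I. ereal (L i x)) + ereal (1 - t) * (SUP i\<in>I. ereal (L i y))"
  proof (rule SUP_least)
    fix i assume i: "i \<in> I"
    have "ereal (L i (t *\<^sub>R x + (1 - t) *\<^sub>R y)) = ereal t * ereal (L i x) + ereal (1 - t) * ereal (L i y)"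
      using assms[OF i] by simp
    also have "\<dots> \<le> ereal t * (SUP i\<in>I. ereal (L i x)) + ereal (1 - t) * (SUP i\<in>I. ereal (L i y))"
      apply (intro add_mono ereal_mult_left_mono)
      using t i by (auto intro: SUP_upper)
    finally show "ereal (L i (t *\<^sub>R x + (1 - t) *\<^sub>R y)) \<le> \<dots>" .
  qed
qed

definition L3 :: "(('a::real_normed_vector \<times> ('a \<Rightarrow>\<^sub>L real)) \<times> ('a \<times> ('a \<Rightarrow>\<^sub>L real))) \<Rightarrow> 'a \<times> ('a \<Rightarrow>\<^sub>L real) \<Rightarrow> real" where
  "L3 p z = pairing (fst (fst p)) (snd (snd p)) - pairing (fst (snd p)) (snd (snd p))
     + pairing (fst z) (snd (fst p)) - pairing (fst (fst p)) (snd (fst p)) + pairing (fst (snd p)) (snd z)"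

lemma L3_cont: "isCont (L3 p) z"
  unfolding L3_def pairing_def
  by (intro continuous_intros blinfun.continuous)

lemma L3_affine: "L3 p (t *\<^sub>R x + (1 - t) *\<^sub>R y) = t * L3 p x + (1 - t) * L3 p y"
  unfolding L3_def pairing_def
  by (simp add: blinfun.add_left blinfun.add_right blinfun.scaleR_left blinfun.scaleR_right blinfun.diff_left blinfun.diff_right algebra_simps)

lemma mono3:
  assumes "n_monotone 3 A" "(a1, s1) \<in> graph A" "(a2, s2) \<in> graph A" "(a3, s3) \<in> graph A"
  shows "pairing a2 s1 + pairing a3 s2 + pairing a1 s3 \<le> pairing a1 s1 + pairing a2 s2 + pairing a3 s3"
proof -
  define a where "a = (\<lambda>i::nat. if i = 1 then a1 else if i = 2 then a2 else a3)"
  define s where "s = (\<lambda>i::nat. if i = 1 then s1 else if i = 2 then s2 else s3)"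
  have "\<forall>i\<in>{1..3}. (a i, s i) \<in> graph A" using assms by (auto simp: a_def s_def)
  then have "(\<Sum>i=1..3. pairing (a i) (s i)) \<ge> (\<Sum>i=1..3. pairing (if i = 3 then a 1 else a (i + 1)) (s i))"
    using assms(1) unfolding n_monotone_def by blast
  then show ?thesis by (simp add: a_def s_def eval_nat_numeral)
qed

lemma cyc:
  assumes "\<And>x xs y ys. (x, xs) \<in> graph A \<Longrightarrow> (y, ys) \<in> graph A \<Longrightarrow> g x + pairing (y - x) xs \<le> (g y :: real)"
  shows "n_monotone n A"
  unfolding n_monotone_def
proof (intro allI impI)
  fix a :: "nat \<Rightarrow> 'a" and as assume G: "\<forall>i\<in>{1..n}. (a i, as i) \<in> graph A"
  define sg where "sg i = (if i = n then a 1 else a (i + 1))" for i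
  have le: "pairing (sg i) (as i) - pairing (a i) (as i) \<le> g (sg i) - g (a i)" if "i \<in> {1..n}" for i
  proof -
    have "(sg i, if i = n then as 1 else as (i + 1)) \<in> graph A"
      using G that by (auto simp: sg_def)
    then have "g (a i) + pairing (sg i - a i) (as i) \<le> g (sg i)"
      using G that by (intro assms) auto
    then show ?thesis by (simp add: pairing_def blinfun.diff_right)
  qed
  have eq: "(\<Sum>i=1..n. g (sg i)) = (\<Sum>i=1..n. g (a i))"
  proof (cases n)
    case 0 then show ?thesis by simp
  next
    case (Suc m)
    have "(\<Sum>i=1..n. g (sg i)) = (\<Sum>i=1..m. g (a (Suc i))) + g (a 1)"
      using Suc by (simp add: sum.cl_ivl_Suc sg_def)
    also have "(\<Sum>i=1..m. g (a (Suc i))) = (\<Sum>i=Suc 1..Suc m. g (a i))"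
      by (simp only: sum.shift_bounds_cl_Suc_ivl)
    also have "\<dots> + g (a 1) = (\<Sum>i=1..Suc m. g (a i))"
    proof -
      have h: "(\<Sum>i=1..Suc m. g (a i)) = g (a 1) + (\<Sum>i=Suc 1..Suc m. g (a i))"
        by (rule sum.atLeast_Suc_atMost) simp
      show ?thesis by (simp only: h add.commute)
    qed
    finally show ?thesis using Suc by simp
  qed
  have "(\<Sum>i=1..n. pairing (sg i) (as i) - pairing (a i) (as i)) \<le> (\<Sum>i=1..n. g (sg i) - g (a i))"
    by (rule sum_mono) (rule le)
  then have "(\<Sum>i=1..n. pairing (sg i) (as i)) - (\<Sum>i=1..n. pairing (a i) (as i)) \<le> 0"
    using eq by (simp add: sum_subtractf)
  then show "(\<Sum>i=1..n. pairing (a i) (as i)) \<ge> (\<Sum>i=1..n. pairing (if i = n then a 1 else a (i + 1)) (as i))"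
    by (simp add: sg_def)
qed

theorem theoremA:
  fixes A :: "'a::banach \<Rightarrow> ('a \<Rightarrow>\<^sub>L real) set"
  assumes "maximal_monotone A"
    and "fitzpatrick_family A = {fitzpatrick A}"
  shows "(n_monotone 3 A \<longleftrightarrow> cyclically_monotone A)
    \<and> (n_monotone 3 A \<longrightarrow>
        (\<forall>vs\<in>image_op A.
           proper_fun (\<lambda>x. fitzpatrick A (x, vs)) \<and> convex_fun (\<lambda>x. fitzpatrick A (x, vs)) \<and>
           lsc_fun (\<lambda>x. fitzpatrick A (x, vs)) \<and>
           (\<forall>x. A x = subdiff (\<lambda>y. fitzpatrick A (y, vs)) x)))"
proof -
  let ?F = "fitzpatrick A"
  let ?G = "graph A"
  have Fin: "?F \<in> fitzpatrick_family A" using assms(2) by simp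
  then have Fge: "\<And>x xs. ?F (x, xs) \<ge> ereal (pairing x xs)"
    and Feq: "\<And>x xs. (x, xs) \<in> ?G \<Longrightarrow> ?F (x, xs) = ereal (pairing x xs)"
    and Fconv: "convex_fun ?F" and Flsc: "lsc_fun ?F"
    by (auto simp: fitzpatrick_family_def)
  have Fdef: "\<And>x xs. ?F (x, xs) = (SUP (y, ys)\<in>?G. ereal (pairing y xs + pairing x ys - pairing y ys))"
    by (simp add: fitzpatrick_def)
  have Gne: "?G \<noteq> {}"
  proof
    assume e: "?G = {}"
    define B where "B = (\<lambda>x::'a. if x = 0 then {0::'a \<Rightarrow>\<^sub>L real} else {})"
    have gB: "graph B = {(0, 0)}" by (auto simp: graph_def B_def split: if_splits)
    have "monotone_op B" by (simp add: monotone_op_def gB pairing_def)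
    then have "graph B = ?G" using assms(1) e unfolding maximal_monotone_def by blast
    then show False using e gB by simp
  qed
  have main: "cyclically_monotone A \<and> (\<forall>vs\<in>image_op A.
           proper_fun (\<lambda>x. fitzpatrick A (x, vs)) \<and> convex_fun (\<lambda>x. fitzpatrick A (x, vs)) \<and>
           lsc_fun (\<lambda>x. fitzpatrick A (x, vs)) \<and>
           (\<forall>x. A x = subdiff (\<lambda>y. fitzpatrick A (y, vs)) x))"
    if m3: "n_monotone 3 A"
  proof -
    define F3 where "F3 = (\<lambda>z. SUP p\<in>?G \<times> ?G. ereal (L3 p z))"
    have F3ge: "?F z \<le> F3 z" for z
    proof (cases z)
      case (Pair x xs)
      show ?thesis unfolding Pair Fdef F3_def
      proof (rule SUP_least)
        fix q assume q: "q \<in> ?G"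
        obtain y ys where [simp]: "q = (y, ys)" by (cases q)
        show "(case q of (y, ys) \<Rightarrow> ereal (pairing y xs + pairing x ys - pairing y ys))
            \<le> (SUP p\<in>?G \<times> ?G. ereal (L3 p (x, xs)))"
          by (rule SUP_upper2[of "(q, q)"]) (use q in \<open>auto simp: L3_def\<close>)
      qed
    qed
    have F3G: "F3 (x, xs) = ereal (pairing x xs)" if xG: "(x, xs) \<in> ?G" for x xs
    proof (rule antisym)
      show "F3 (x, xs) \<le> ereal (pairing x xs)"
        unfolding F3_def
      proof (rule SUP_least)
        fix p assume p: "p \<in> ?G \<times> ?G"
        obtain a as b bs where [simp]: "p = ((a, as), (b, bs))" by (cases p) auto
        have "pairing a bs + pairing x as + pairing b xs \<le> pairing b bs + pairing a as + pairing x xs"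
          using mono3[OF m3, of b bs a as x xs] p xG by auto
        then show "ereal (L3 p (x, xs)) \<le> ereal (pairing x xs)" by (simp add: L3_def)
      qed
      show "ereal (pairing x xs) \<le> F3 (x, xs)" using F3ge[of "(x, xs)"] Feq[OF xG] by simp
    qed
    have "F3 \<in> fitzpatrick_family A"
      unfolding fitzpatrick_family_def
    proof (intro CollectI conjI allI ballI)
      show "proper_fun F3"
        unfolding proper_fun_def
      proof (intro conjI allI)
        fix z show "F3 z \<noteq> -\<infinity>"
          using F3ge[of z] Fge[of "fst z" "snd z"] by (cases z) auto
      next
        obtain x xs where "(x, xs) \<in> ?G" using Gne by auto
        then have "F3 (x, xs) \<noteq> \<infinity>" using F3G by simp
        then show "\<exists>z. F3 z \<noteq> \<infinity>" by blast
      qed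
      show "convex_fun F3" unfolding F3_def by (rule sup_affine_convex) (rule L3_affine)
      show "lsc_fun F3" unfolding F3_def by (rule sup_affine_lsc) (rule L3_cont)
      fix x xs show "ereal (pairing x xs) \<le> F3 (x, xs)" using F3ge[of "(x, xs)"] Fge[of x xs] by simp
    next
      fix z assume "z \<in> ?G"
      then show "(case z of (x, xs) \<Rightarrow> F3 (x, xs) = ereal (pairing x xs))" using F3G by auto
    qed
    then have F3F: "F3 = ?F" using assms(2) by simp
    have key: "?F (x, vs) \<noteq> \<infinity> \<and> ?F (x, vs) + ereal (pairing (y - x) xs) \<le> ?F (y, vs)"
      if uG: "(u, vs) \<in> ?G" and xG: "(x, xs) \<in> ?G" for u vs x xs y
    proof
      have "?F (x, vs) \<le> ereal (pairing u vs + pairing x xs - pairing u xs)"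
        unfolding Fdef
      proof (rule SUP_least)
        fix q assume q: "q \<in> ?G"
        obtain b bs where [simp]: "q = (b, bs)" by (cases q)
        have "pairing b vs + pairing x bs + pairing u xs \<le> pairing u vs + pairing b bs + pairing x xs"
          using mono3[OF m3, of u vs b bs x xs] q uG xG by auto
        then show "(case q of (b, bs) \<Rightarrow> ereal (pairing b vs + pairing x bs - pairing b bs))
            \<le> ereal (pairing u vs + pairing x xs - pairing u xs)" by simp
      qed
      then show "?F (x, vs) \<noteq> \<infinity>" by auto
      have "(SUP q\<in>?G. (case q of (b, bs) \<Rightarrow> ereal (pairing b vs + pairing x bs - pairing b bs))
              + ereal (pairing (y - x) xs)) \<le> ?F (y, vs)"
        unfolding F3F[symmetric] F3_def
      proof (rule SUP_least)
        fix q assume q: "q \<in> ?G"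
        obtain b bs where [simp]: "q = (b, bs)" by (cases q)
        show "(case q of (b, bs) \<Rightarrow> ereal (pairing b vs + pairing x bs - pairing b bs))
              + ereal (pairing (y - x) xs) \<le> (SUP p\<in>?G \<times> ?G. ereal (L3 p (y, vs)))"
          by (rule SUP_upper2[of "((x, xs), q)"])
            (use q xG in \<open>auto simp: L3_def pairing_def blinfun.diff_right\<close>)
      qed
      then show "?F (x, vs) + ereal (pairing (y - x) xs) \<le> ?F (y, vs)"
        by (simp add: SUP_ereal_add_left[OF Gne] Fdef)
    qed
    have finite: "\<exists>r. ?F (x, vs) = ereal r" if "(u, vs) \<in> ?G" "(x, xs) \<in> ?G" for u vs x xs
      using key[OF that, of x] Fge[of x vs] by (cases "?F (x, vs)") auto
    have cyc_part: "cyclically_monotone A"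
    proof -
      obtain u vs where uG: "(u, vs) \<in> ?G" using Gne by auto
      define g where "g y = real_of_ereal (?F (y, vs))" for y
      have "g x + pairing (y - x) xs \<le> g y" if h: "(x, xs) \<in> ?G" "(y, ys) \<in> ?G" for x xs y ys
      proof -
        obtain rx where rx: "?F (x, vs) = ereal rx" using finite[OF uG h(1)] by blast
        obtain ry where ry: "?F (y, vs) = ereal ry" using finite[OF uG h(2)] by blast
        show ?thesis using key[OF uG h(1), of y] rx ry by (simp add: g_def)
      qed
      then show ?thesis unfolding cyclically_monotone_def by (blast intro: cyc)
    qed
    show ?thesis
    proof (intro conjI ballI cyc_part)
      fix vs assume "vs \<in> image_op A"
      then obtain u where uG: "(u, vs) \<in> ?G" by (auto simp: image_op_def graph_def)
      let ?f = "\<lambda>x. ?F (x, vs)"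
      show "proper_fun ?f"
        unfolding proper_fun_def
      proof (intro conjI allI)
        fix x show "?f x \<noteq> -\<infinity>" using Fge[of x vs] by auto
      next
        show "\<exists>x. ?f x \<noteq> \<infinity>" using Feq[OF uG] by (intro exI[of _ u]) simp
      qed
      show "convex_fun ?f"
        unfolding convex_fun_def
      proof (intro allI impI)
        fix x y :: 'a and t :: real assume t: "0 \<le> t \<and> t \<le> 1"
        have e: "t *\<^sub>R (x, vs) + (1 - t) *\<^sub>R (y, vs) = (t *\<^sub>R x + (1 - t) *\<^sub>R y, vs)"
          by (simp add: algebra_simps)
        show "?f (t *\<^sub>R x + (1 - t) *\<^sub>R y) \<le> ereal t * ?f x + ereal (1 - t) * ?f y"
          using Fconv t unfolding convex_fun_def e[symmetric] by blast
      qed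
      show "lsc_fun ?f"
        unfolding lsc_fun_def
      proof (intro allI impI)
        fix x c assume "c < ?f x"
        then have ev: "\<forall>\<^sub>F z in nhds (x, vs). c < ?F z" using Flsc unfolding lsc_fun_def by blast
        have "filterlim (\<lambda>y. (y, vs)) (nhds (x, vs)) (nhds x)"
          by (intro tendsto_Pair filterlim_ident tendsto_const)
        then show "\<forall>\<^sub>F y in nhds x. c < ?f y" using ev unfolding filterlim_iff by blast
      qed
      define B where "B = subdiff ?f"
      have sub: "graph A \<subseteq> graph B"
      proof (clarsimp simp: graph_def B_def)
        fix x xs assume "xs \<in> A x"
        then have xG: "(x, xs) \<in> ?G" by (simp add: graph_def)
        show "xs \<in> subdiff ?f x"
          unfolding subdiff_def using key[OF uG xG] Fge[of x vs] by (auto simp: add.commute)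
      qed
      have "monotone_op B"
        unfolding monotone_op_def
      proof (clarsimp simp: graph_def B_def)
        fix x xs y ys assume xs: "xs \<in> subdiff ?f x" and ys: "ys \<in> subdiff ?f y"
        obtain rx where rx: "?F (x, vs) = ereal rx" using xs by (cases "?F (x, vs)") (auto simp: subdiff_def)
        obtain ry where ry: "?F (y, vs) = ereal ry" using ys by (cases "?F (y, vs)") (auto simp: subdiff_def)
        have "?f y \<ge> ?f x + ereal (pairing (y - x) xs)" using xs by (simp add: subdiff_def)
        then have 1: "ry \<ge> rx + pairing (y - x) xs" using rx ry by simp
        have "?f x \<ge> ?f y + ereal (pairing (x - y) ys)" using ys by (simp add: subdiff_def)
        then have 2: "rx \<ge> ry + pairing (x - y) ys" using rx ry by simp
        show "0 \<le> pairing (x - y) (xs - ys)"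
          using 1 2 by (simp add: pairing_def blinfun.diff_left blinfun.diff_right)
      qed
      then have gB: "graph B = graph A" using sub assms(1) unfolding maximal_monotone_def by blast
      show "\<forall>x. A x = subdiff ?f x"
      proof
        fix x show "A x = subdiff ?f x"
          using gB unfolding B_def graph_def by (auto simp: set_eq_iff)
      qed
    qed
  qed
  show ?thesis
    using main cyclically_monotone_def by blast
qed

end
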